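(* Let $\mathbb P$ be the law of a stationary simple point process on $\mathbb R^d$ with finite positive intensity $m$ and $\mathbb P(\xi\ne\emptyset)=1$. Suppose Condition $C(\alpha)$ holds for some $\alpha>0$ and $\rho_\gamma<+\infty$ for some $\gamma>1$. Then there is a constant $C_0>0$ such that $$\sup_{x\in\mathbb R^d}\mathbb P_0\big(\xi(\Lambda_\ell(x))=0\big)\le C_0\ell^{-\alpha/\gamma'}\qquad\forall\ell>0,$$ where $\gamma'=\frac{\gamma}{\gamma-1}$.
   Context: $\mathcal N$ = locally finite subsets of $\mathbb R^d$, identified with counting measures ($\xi(A)=\#(\xi\cap A)$); $\tau_x\xi=\xi-x$; stationarity: $\mathbb P(\tau_xA)=\mathbb P(A)$; $m=\mathbb E[\xi([0,1]^d)]$. $\Lambda_\ell(x)=x+[-\ell,\ell]^d$, $\Lambda_\ell=\Lambda_\ell(0)$. $\rho_\gamma=\mathbb E[\xi([0,1]^d)^\gamma]$. Palm distribution $\mathbb P_0(A)=\frac1m\int d\mathbb P(\xi)\sum_{x\in\xi\cap[0,1]^d}\mathbf 1_A(\tau_x\xi)$. Condition $C(\alpha)$: $\exists\kappa>0$ with $\mathbb P(\xi(\Lambda_\ell)=0)\le\kappa\ell^{-\alpha}$ for all $\ell\ge1$. *)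

theory Defs
  imports "HOL-Probability.Probability"
begin

text \<open>Point configurations in R^d are subsets of real^'n ('n finite, d = CARD('n)).
  A configuration is identified with its counting measure: xi(A) = card (xi \<inter> A).\<close>

definition cnt :: "(real^'n::finite) set \<Rightarrow> (real^'n) set \<Rightarrow> nat" where
  "cnt \<xi> A = card (\<xi> \<inter> A)"

definition loc_finite_configs :: "(real^'n::finite) set set" where
  "loc_finite_configs = {\<xi>. \<forall>K. compact K \<longrightarrow> finite (\<xi> \<inter> K)}"

definition config_space :: "(real^'n::finite) set measure" where
  "config_space = sigma loc_finite_configs
     {{\<xi> \<in> loc_finite_configs. cnt \<xi> B = k} | B k. B \<in> sets borel \<and> bounded B}"

definition shift :: "real^'n::finite \<Rightarrow> (real^'n) set \<Rightarrow> (real^'n) set" where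
  "shift x \<xi> = (\<lambda>y. y - x) ` \<xi>"

definition unit_cube :: "(real^'n::finite) set" where
  "unit_cube = cbox 0 1"

definition Lambda :: "real \<Rightarrow> real^'n::finite \<Rightarrow> (real^'n) set" where
  "Lambda l x = cbox (x - vec l) (x + vec l)"

definition stationary :: "(real^'n::finite) set measure \<Rightarrow> bool" where
  "stationary P \<longleftrightarrow> (\<forall>x. \<forall>A \<in> sets P. measure P (shift x ` A) = measure P A)"

definition intensity :: "(real^'n::finite) set measure \<Rightarrow> ennreal" where
  "intensity P = (\<integral>\<^sup>+ \<xi>. ennreal (real (cnt \<xi> unit_cube)) \<partial>P)"

definition moment :: "(real^'n::finite) set measure \<Rightarrow> real \<Rightarrow> ennreal" where
  "moment P \<gamma> = (\<integral>\<^sup>+ \<xi>. ennreal (real (cnt \<xi> unit_cube) powr \<gamma>) \<partial>P)"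

definition palm :: "(real^'n::finite) set measure \<Rightarrow> (real^'n) set set \<Rightarrow> real" where
  "palm P A = enn2real (\<integral>\<^sup>+ \<xi>. ennreal (\<Sum>x \<in> \<xi> \<inter> unit_cube. indicator A (shift x \<xi>)) \<partial>P)
              / enn2real (intensity P)"

definition cond_C :: "(real^'n::finite) set measure \<Rightarrow> real \<Rightarrow> bool" where
  "cond_C P \<alpha> \<longleftrightarrow> (\<exists>\<kappa>>0. \<forall>l\<ge>1.
      measure P {\<xi> \<in> space P. cnt \<xi> (Lambda l 0) = 0} \<le> \<kappa> * l powr (-\<alpha>))"

end

theory Submission imports Defs begin

lemma space_cs: "space (config_space :: (real^'n::finite) set measure) = loc_finite_configs"
  unfolding config_space_def by (rule space_measure_of) auto

lemma gen_in_sets: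
  fixes B :: "(real^'n::finite) set"
  assumes "sets P = sets config_space" "B \<in> sets borel" "bounded B"
  shows "{\<xi> \<in> space P. cnt \<xi> B = k} \<in> sets P"
proof -
  have sp: "space P = loc_finite_configs"
    using sets_eq_imp_space_eq[OF assms(1)] space_cs by metis
  have "sets (config_space :: (real^'n) set measure) = sigma_sets loc_finite_configs
     {{\<xi> \<in> loc_finite_configs. cnt \<xi> B = k} | B k. B \<in> sets borel \<and> bounded B}"
    unfolding config_space_def by (rule sets_measure_of) auto
  then show ?thesis using assms sp by (auto intro!: sigma_sets.Basic)
qed

lemma cnt_shift:
  fixes \<xi> B :: "(real^'n::finite) set"
  shows "cnt (shift z \<xi>) B = cnt \<xi> {w. w - z \<in> B}"
proof -
  have "shift z \<xi> \<inter> B = (\<lambda>y. y - z) ` (\<xi> \<inter> {w. w - z \<in> B})"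
    unfolding shift_def by auto
  moreover have "inj_on (\<lambda>y. y - z) (\<xi> \<inter> {w. w - z \<in> B})" by (auto intro: inj_onI)
  ultimately show ?thesis unfolding cnt_def by (simp add: card_image)
qed

lemma Lambda_shift:
  fixes z :: "real^'n::finite"
  shows "{w. w - z \<in> Lambda r y} = Lambda r (y + z)"
  unfolding Lambda_def by (auto simp: mem_box_cart algebra_simps)

lemma shift_loc_finite:
  fixes \<xi> :: "(real^'n::finite) set"
  assumes "\<xi> \<in> loc_finite_configs"
  shows "shift z \<xi> \<in> loc_finite_configs"
  unfolding loc_finite_configs_def
proof (intro CollectI allI impI)
  fix K :: "(real^'n) set" assume K: "compact K"
  have "shift z \<xi> \<inter> K = (\<lambda>y. y - z) ` (\<xi> \<inter> ((+) z ` K))"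
    unfolding shift_def by (auto simp: image_iff) (metis add.commute diff_add_cancel)
  moreover have "finite (\<xi> \<inter> ((+) z ` K))"
    using assms compact_translation[OF K] unfolding loc_finite_configs_def by blast
  ultimately show "finite (shift z \<xi> \<inter> K)" by simp
qed

lemma shift_inv:
  fixes \<xi> :: "(real^'n::finite) set"
  shows "shift (-z) (shift z \<xi>) = \<xi>"
  unfolding shift_def by (auto simp: image_iff)

lemma cnt_shift_Lambda:
  fixes z :: "real^'n::finite"
  shows "cnt (shift z \<xi>) (Lambda r y) = cnt \<xi> (Lambda r (y + z))"
  using cnt_shift[of z \<xi> "Lambda r y"] Lambda_shift[of z r y] by argo

lemma stat_empty:
  fixes P :: "(real^'n::finite) set measure"
  assumes "sets P = sets config_space" "stationary P"
  shows "measure P {\<xi> \<in> space P. cnt \<xi> (Lambda r z) = 0} = measure P {\<xi> \<in> space P. cnt \<xi> (Lambda r 0) = 0}"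
proof -
  have sp: "space P = loc_finite_configs"
    using sets_eq_imp_space_eq[OF assms(1)] space_cs by metis
  let ?E0 = "{\<xi> \<in> space P. cnt \<xi> (Lambda r 0) = 0}"
  have E0: "?E0 \<in> sets P"
    by (rule gen_in_sets[OF assms(1)]) (auto simp: Lambda_def)
  have eq: "shift (-z) ` ?E0 = {\<xi> \<in> space P. cnt \<xi> (Lambda r z) = 0}"
  proof (intro equalityI subsetI)
    fix \<eta> assume "\<eta> \<in> shift (-z) ` ?E0"
    then obtain \<xi> where x: "\<xi> \<in> space P" "cnt \<xi> (Lambda r 0) = 0" and e: "\<eta> = shift (-z) \<xi>" by blast
    have "cnt (shift (- z) \<xi>) (Lambda r z) = 0" using x(2) cnt_shift_Lambda[of "-z" \<xi> r z] by simp
    moreover have "shift (- z) \<xi> \<in> space P" using shift_loc_finite[of \<xi> "-z"] sp x(1) by simp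
    ultimately show "\<eta> \<in> {\<xi> \<in> space P. cnt \<xi> (Lambda r z) = 0}" using e by simp
  next
    fix \<xi> assume "\<xi> \<in> {\<xi> \<in> space P. cnt \<xi> (Lambda r z) = 0}"
    then have a: "\<xi> \<in> space P" "cnt \<xi> (Lambda r z) = 0" by auto
    have "cnt (shift z \<xi>) (Lambda r 0) = 0" using a(2) cnt_shift_Lambda[of z \<xi> r 0] by simp
    moreover have "shift z \<xi> \<in> space P" using shift_loc_finite[of \<xi> z] sp a(1) by simp
    ultimately have "shift z \<xi> \<in> ?E0" by simp
    then show "\<xi> \<in> shift (- z) ` ?E0" using shift_inv[of z \<xi>] by (simp add: image_iff) (metis)
  qed
  have "measure P (shift (-z) ` ?E0) = measure P ?E0" using assms(2) E0 unfolding stationary_def by blast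
  then show ?thesis unfolding eq .
qed


lemma Lambda_sub:
  fixes x y :: "real^'n::finite"
  assumes "y \<in> unit_cube"
  shows "Lambda (l - 1/2) (x + vec (1/2)) \<subseteq> Lambda l (x + y)"
proof
  fix w assume w: "w \<in> Lambda (l - 1/2) (x + vec (1/2))"
  have y: "\<And>i. 0 \<le> y$i \<and> y$i \<le> 1" using assms unfolding unit_cube_def by (auto simp: mem_box_cart)
  show "w \<in> Lambda l (x + y)" using w y unfolding Lambda_def mem_box_cart
    by (auto simp: algebra_simps) (smt (verit))+
qed

lemma geo:
  fixes \<xi> :: "(real^'n::finite) set"
  assumes "\<xi> \<in> loc_finite_configs" "y \<in> unit_cube" "cnt (shift y \<xi>) (Lambda l x) = 0"
  shows "cnt \<xi> (Lambda (l - 1/2) (x + vec (1/2))) = 0"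
proof -
  have "cnt \<xi> (Lambda l (x + y)) = 0" using assms(3) cnt_shift_Lambda[of y \<xi> l x] by simp
  moreover have "finite (\<xi> \<inter> Lambda l (x + y))"
    using assms(1) unfolding loc_finite_configs_def Lambda_def by (auto simp: compact_cbox)
  ultimately have "\<xi> \<inter> Lambda l (x + y) = {}" unfolding cnt_def by simp
  then have "\<xi> \<inter> Lambda (l - 1/2) (x + vec (1/2)) = {}" using Lambda_sub[OF assms(2), of l x] by blast
  then show ?thesis unfolding cnt_def by simp
qed

lemma sum_bound:
  fixes \<xi> :: "(real^'n::finite) set"
  assumes "\<xi> \<in> loc_finite_configs"
    and "E = {\<xi> \<in> S. cnt \<xi> (Lambda (l - 1/2) (x + vec (1/2))) = 0}" "\<xi> \<in> S"
  shows "(\<Sum>y \<in> \<xi> \<inter> unit_cube. indicator {\<eta>. cnt \<eta> (Lambda l x) = 0} (shift y \<xi>) :: real)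
     \<le> real (cnt \<xi> unit_cube) * indicator E \<xi>"
proof (cases "\<xi> \<in> E")
  case True
  have "(\<Sum>y \<in> \<xi> \<inter> unit_cube. indicator {\<eta>. cnt \<eta> (Lambda l x) = 0} (shift y \<xi>) :: real)
     \<le> of_nat (card (\<xi> \<inter> unit_cube)) * 1"
    by (rule sum_bounded_above) (auto simp: indicator_def)
  then show ?thesis using True unfolding cnt_def by simp
next
  case False
  then have "cnt \<xi> (Lambda (l - 1/2) (x + vec (1/2))) \<noteq> 0" using assms(2,3) by auto
  then have "\<And>y. y \<in> \<xi> \<inter> unit_cube \<Longrightarrow> indicator {\<eta>. cnt \<eta> (Lambda l x) = 0} (shift y \<xi>) = (0::real)"
    using geo[OF assms(1), of _ l x] by (auto simp: indicator_def)
  then show ?thesis using False by simp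
qed

lemma young_like:
  fixes N K q g :: real
  assumes "N \<ge> 0" "K > 0" "g > 1" "0 \<le> i" "i \<le> 1" "N * i \<le> N" "i = 0 \<or> i = 1"
  shows "N * i \<le> K * i + K powr (1 - g) * N powr g"
proof (cases "N \<le> K")
  case True
  have "0 \<le> K powr (1 - g) * N powr g" by simp
  then show ?thesis using assms(7) True
    by (elim disjE) (simp_all only: mult_1_right mult_zero_right; linarith)+
next
  case False
  then have NK: "N > K" by simp
  have "N = N powr g * N powr (1 - g)" using NK assms by (simp add: powr_add[symmetric])
  also have "N powr (1 - g) \<le> K powr (1 - g)" using NK assms by (intro powr_mono2') auto
  then have "N powr g * N powr (1 - g) \<le> N powr g * K powr (1 - g)" by (intro mult_left_mono) auto
  finally have "N \<le> K powr (1 - g) * N powr g" by (simp add: mult.commute)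
  then show ?thesis using assms by (auto)
qed


lemma N_meas:
  fixes P :: "(real^'n::finite) set measure"
  assumes "sets P = sets config_space"
  shows "(\<lambda>\<xi>. cnt \<xi> unit_cube) \<in> measurable P (count_space UNIV)"
  unfolding measurable_count_space_eq2_countable
proof (intro conjI ballI)
  fix k :: nat
  have "(\<lambda>\<xi>. cnt \<xi> unit_cube) -` {k} \<inter> space P = {\<xi> \<in> space P. cnt \<xi> (unit_cube::(real^'n) set) = k}" by auto
  also have "\<dots> \<in> sets P" by (rule gen_in_sets[OF assms]) (auto simp: unit_cube_def)
  finally show "(\<lambda>\<xi>. cnt \<xi> unit_cube) -` {k} \<inter> space P \<in> sets P" .
qed auto

theorem lemma10p3:
  fixes P :: "(real^'n::finite) set measure" and \<alpha> \<gamma> :: real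
  assumes "prob_space P"
    and "sets P = sets config_space"
    and "stationary P"
    and "0 < intensity P" and "intensity P < \<infinity>"
    and "prob_space.prob P {\<xi> \<in> space P. \<xi> \<noteq> {}} = 1"
    and "\<alpha> > 0" and "cond_C P \<alpha>"
    and "\<gamma> > 1" and "moment P \<gamma> < \<infinity>"
  shows "\<exists>C0>0. \<forall>l>0. \<forall>x. palm P {\<xi>. cnt \<xi> (Lambda l x) = 0}
            \<le> C0 * l powr (- \<alpha> / (\<gamma> / (\<gamma> - 1)))"
proof -
  interpret prob_space P by fact
  have sp: "space P = loc_finite_configs"
    using sets_eq_imp_space_eq[OF assms(2)] space_cs by metis
  obtain \<kappa> where kpos: "\<kappa> > 0" and kap: "\<And>l. l \<ge> 1 \<Longrightarrow>
      measure P {\<xi> \<in> space P. cnt \<xi> (Lambda l 0) = 0} \<le> \<kappa> * l powr (-\<alpha>)"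
    using assms(8) unfolding cond_C_def by blast
  define m where "m = enn2real (intensity P)"
  have mpos: "m > 0" using assms(4,5) unfolding m_def by (simp add: enn2real_positive_iff)
  have im: "intensity P = ennreal m" using assms(5) unfolding m_def by (simp add: ennreal_enn2real_if)
  define \<rho> where "\<rho> = enn2real (moment P \<gamma>)"
  have rpos: "\<rho> \<ge> 0" unfolding \<rho>_def by simp
  have mo: "moment P \<gamma> = ennreal \<rho>" using assms(10) unfolding \<rho>_def by (simp add: ennreal_enn2real_if)
  define \<beta> where "\<beta> = (\<gamma> - 1) / \<gamma>"
  have bpos: "\<beta> > 0" "\<beta> < 1" using assms(9) unfolding \<beta>_def by (auto simp: field_simps)
  have expo: "- \<alpha> / (\<gamma> / (\<gamma> - 1)) = - (\<alpha> * \<beta>)" using assms(9) unfolding \<beta>_def by (auto simp: field_simps)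
  define C0 where "C0 = (3/2) powr (\<alpha> * \<beta>) * (1 + (1 + \<rho>) * \<kappa> powr \<beta> / m)"
  have C0pos: "C0 > 0" unfolding C0_def using rpos mpos kpos by (auto intro!: mult_pos_pos add_pos_nonneg)
  have main: "palm P {\<xi>. cnt \<xi> (Lambda l x) = 0} \<le> C0 * l powr (- (\<alpha> * \<beta>))" if lpos: "l > 0" for l x
  proof -
    define I where "I = (\<integral>\<^sup>+ \<xi>. ennreal (\<Sum>y \<in> \<xi> \<inter> unit_cube. indicator {\<eta>. cnt \<eta> (Lambda l x) = 0} (shift y \<xi>)) \<partial>P)"
    have palm_eq: "palm P {\<xi>. cnt \<xi> (Lambda l x) = 0} = enn2real I / m"
      unfolding palm_def I_def m_def by simp
    have Ile: "I \<le> intensity P" unfolding I_def intensity_def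
    proof (rule nn_integral_mono)
      fix \<xi> :: "(real^'n) set"
      have "(\<Sum>y \<in> \<xi> \<inter> unit_cube. indicator {\<eta>. cnt \<eta> (Lambda l x) = 0} (shift y \<xi>) :: real)
         \<le> of_nat (card (\<xi> \<inter> unit_cube)) * 1"
        by (rule sum_bounded_above) (auto simp: indicator_def)
      then show "ennreal (\<Sum>y \<in> \<xi> \<inter> unit_cube. indicator {\<eta>. cnt \<eta> (Lambda l x) = 0} (shift y \<xi>))
         \<le> ennreal (real (cnt \<xi> unit_cube))" unfolding cnt_def by (intro ennreal_leI) simp
    qed
    have Ifin: "I < \<infinity>" using Ile assms(5) by (simp add: order_le_less_trans)
    show ?thesis
    proof (cases "l < 3/2")
      case True
      have "enn2real I \<le> m" using Ile im by (intro enn2real_leI) (auto simp: mpos less_imp_le)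
      then have p1: "palm P {\<xi>. cnt \<xi> (Lambda l x) = 0} \<le> 1" using palm_eq mpos by simp
      have "1 \<le> (3/2) powr (\<alpha> * \<beta>) * l powr (- (\<alpha> * \<beta>))"
      proof -
        have "(3/2) powr (\<alpha> * \<beta>) * l powr (- (\<alpha> * \<beta>)) = (3 / 2 / l) powr (\<alpha> * \<beta>)"
          using lpos by (simp add: powr_minus_divide powr_divide powr_mult)
        also have "\<dots> \<ge> 1" using True lpos assms(7) bpos by (intro ge_one_powr_ge_zero) (auto simp: field_simps)
        finally show ?thesis .
      qed
      also have "(3/2) powr (\<alpha> * \<beta>) * l powr (- (\<alpha> * \<beta>)) \<le> C0 * l powr (- (\<alpha> * \<beta>))"
        unfolding C0_def using rpos mpos kpos by (intro mult_right_mono) auto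
      finally show ?thesis using p1 by linarith
    next
      case False
      then have l32: "l \<ge> 3/2" by simp
      define r where "r = l - 1/2"
      have r1: "r \<ge> 1" using l32 unfolding r_def by simp
      define E where "E = {\<xi> \<in> space P. cnt \<xi> (Lambda r (x + vec (1/2))) = 0}"
      have Esets[measurable]: "E \<in> sets P" unfolding E_def
        by (rule gen_in_sets[OF assms(2)]) (auto simp: Lambda_def)
      define q where "q = \<kappa> * r powr (-\<alpha>)"
      have qpos: "q > 0" unfolding q_def using kpos r1 by simp
      have pE: "measure P E \<le> q" unfolding E_def q_def
        using stat_empty[OF assms(2,3), of r "x + vec (1/2)"] kap[OF r1] by simp
      define K where "K = q powr (-1/\<gamma>)"
      have Kpos: "K > 0" unfolding K_def using qpos by simp
      define K' where "K' = K powr (1 - \<gamma>)"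
      have K'pos: "K' > 0" unfolding K'_def using Kpos by simp
      have Nm[measurable]: "(\<lambda>\<xi>. cnt \<xi> unit_cube) \<in> measurable P (count_space UNIV)" by (rule N_meas[OF assms(2)])
      have Npm: "(\<lambda>\<xi>. ennreal (real (cnt \<xi> unit_cube) powr \<gamma>)) \<in> borel_measurable P"
        using measurable_compose[OF Nm borel_measurable_count_space] by simp
      have pt: "ennreal (\<Sum>y \<in> \<xi> \<inter> unit_cube. indicator {\<eta>. cnt \<eta> (Lambda l x) = 0} (shift y \<xi>))
          \<le> ennreal K * indicator E \<xi> + ennreal K' * ennreal (real (cnt \<xi> unit_cube) powr \<gamma>)"
        if xs: "\<xi> \<in> space P" for \<xi>
      proof -
        have "(\<Sum>y \<in> \<xi> \<inter> unit_cube. indicator {\<eta>. cnt \<eta> (Lambda l x) = 0} (shift y \<xi>) :: real)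
          \<le> real (cnt \<xi> unit_cube) * indicator E \<xi>"
          by (rule sum_bound[of _ E "space P" l]) (use xs sp in \<open>auto simp: E_def r_def\<close>)
        also have "\<dots> \<le> K * indicator E \<xi> + K' * real (cnt \<xi> unit_cube) powr \<gamma>"
          unfolding K'_def by (rule young_like) (use Kpos assms(9) in \<open>auto simp: indicator_def\<close>)
        finally have "ennreal (\<Sum>y \<in> \<xi> \<inter> unit_cube. indicator {\<eta>. cnt \<eta> (Lambda l x) = 0} (shift y \<xi>))
           \<le> ennreal (K * indicator E \<xi> + K' * real (cnt \<xi> unit_cube) powr \<gamma>)"
          by (rule ennreal_leI)
        also have "\<dots> = ennreal K * indicator E \<xi> + ennreal K' * ennreal (real (cnt \<xi> unit_cube) powr \<gamma>)"
          using Kpos K'pos by (simp add: ennreal_plus ennreal_mult indicator_def)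
        finally show ?thesis .
      qed
      have "I \<le> (\<integral>\<^sup>+ \<xi>. ennreal K * indicator E \<xi> + ennreal K' * ennreal (real (cnt \<xi> unit_cube) powr \<gamma>) \<partial>P)"
        unfolding I_def by (rule nn_integral_mono) (rule pt)
      also have "\<dots> = (\<integral>\<^sup>+ \<xi>. ennreal K * indicator E \<xi> \<partial>P) + (\<integral>\<^sup>+ \<xi>. ennreal K' * ennreal (real (cnt \<xi> unit_cube) powr \<gamma>) \<partial>P)"
        using Npm by (intro nn_integral_add) auto
      also have "\<dots> = ennreal K * emeasure P E + ennreal K' * moment P \<gamma>"
        unfolding moment_def using Npm by (simp add: nn_integral_cmult_indicator nn_integral_cmult)
      also have "\<dots> = ennreal (K * measure P E + K' * \<rho>)"
        using Kpos K'pos rpos by (simp add: mo emeasure_eq_measure ennreal_plus ennreal_mult)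
      finally have "enn2real I \<le> K * measure P E + K' * \<rho>"
        using Kpos K'pos rpos by (intro enn2real_leI) auto
      also have "\<dots> \<le> K * q + K' * \<rho>" using pE Kpos by simp
      also have "K * q = q powr \<beta>"
      proof -
        have "K * q = q powr (-1/\<gamma>) * q powr 1" unfolding K_def using qpos by simp
        also have "\<dots> = q powr (-1/\<gamma> + 1)" by (rule powr_add[symmetric])
        also have "-1/\<gamma> + 1 = \<beta>" unfolding \<beta>_def using assms(9) by (simp add: field_simps)
        finally show ?thesis .
      qed
      also have "K' = q powr \<beta>"
      proof -
        have "K' = q powr ((-1/\<gamma>) * (1 - \<gamma>))" unfolding K'_def K_def by (rule powr_powr)
        also have "(-1/\<gamma>) * (1 - \<gamma>) = \<beta>" unfolding \<beta>_def using assms(9) by (simp add: field_simps)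
        finally show ?thesis .
      qed
      finally have Ib: "enn2real I \<le> (1 + \<rho>) * q powr \<beta>" by (simp add: algebra_simps)
      have "q powr \<beta> = \<kappa> powr \<beta> * r powr (- (\<alpha> * \<beta>))"
        unfolding q_def using kpos r1 by (simp add: powr_mult powr_powr)
      also have "r powr (- (\<alpha> * \<beta>)) \<le> (2/3 * l) powr (- (\<alpha> * \<beta>))"
        using l32 assms(7) bpos unfolding r_def by (intro powr_mono2') auto
      also have "(2/3 * l) powr (- (\<alpha> * \<beta>)) = (3/2) powr (\<alpha> * \<beta>) * l powr (- (\<alpha> * \<beta>))"
      proof -
        have "(2/3*l) powr (- (\<alpha> * \<beta>)) = (2/3) powr (- (\<alpha> * \<beta>)) * l powr (- (\<alpha> * \<beta>))"
          using lpos by (intro powr_mult)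
        moreover have "(2/3::real) powr (- (\<alpha> * \<beta>)) = (3/2) powr (\<alpha> * \<beta>)"
          by (simp add: powr_minus_divide powr_divide)
        ultimately show ?thesis by simp
      qed
      finally have qb: "q powr \<beta> \<le> \<kappa> powr \<beta> * ((3/2) powr (\<alpha> * \<beta>) * l powr (- (\<alpha> * \<beta>)))"
        using kpos by (simp add: mult_left_mono)
      have "palm P {\<xi>. cnt \<xi> (Lambda l x) = 0} \<le> (1 + \<rho>) * q powr \<beta> / m"
        using palm_eq Ib mpos by (simp add: divide_right_mono)
      also have "\<dots> \<le> (1 + \<rho>) * (\<kappa> powr \<beta> * ((3/2) powr (\<alpha> * \<beta>) * l powr (- (\<alpha> * \<beta>)))) / m"
        using qb rpos mpos by (intro divide_right_mono mult_left_mono) auto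
      also have "\<dots> \<le> C0 * l powr (- (\<alpha> * \<beta>))"
        unfolding C0_def using mpos by (simp add: field_simps)
      finally show ?thesis .
    qed
  qed
  show ?thesis unfolding expo using C0pos main by blast
qed

end
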